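(* Let $M$ be a $3$-connected simple matroid with a $3$-connected simple minor $N$, and suppose $r(M)\ge 4$. If $X$ is the hull of an $N$-carambole of $M$, then $X$ is an independent set of $M$ and every element of $X$ is $N$-contractible in $M$.
   Context: An element $x$ is $N$-contractible in $M$ if $M/x$ is a $3$-connected matroid with an $N$-minor; a set $Y$ is vertically $N$-contractible if $\mathrm{si}(M/Y)$ (the simplification) is a $3$-connected matroid with an $N$-minor. A line is a rank-$2$ set. For $n\ge3$, a sequence $x_1,\dots,x_n,y_1,\dots,y_n$ of elements of $M$ is an $N$-carambole of $M$ if $L:=\{y_1,\dots,y_n\}$ is a vertically $N$-contractible line of $M$ with $n$ distinct elements and, for each $i$, $(L-y_i)\cup x_i$ is a cocircuit of $M$; $X:=\{x_1,\dots,x_n\}$ is its hull. *)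

theory Defs
  imports Main
begin

type_synonym 'a matroid = "'a set \<times> ('a set \<Rightarrow> bool)"

definition gr :: "'a matroid \<Rightarrow> 'a set" where "gr M = fst M"
definition ind :: "'a matroid \<Rightarrow> 'a set \<Rightarrow> bool" where "ind M = snd M"

definition is_matroid :: "'a matroid \<Rightarrow> bool" where
  "is_matroid M \<longleftrightarrow> finite (gr M) \<and> ind M {}
     \<and> (\<forall>I. ind M I \<longrightarrow> I \<subseteq> gr M)
     \<and> (\<forall>I J. ind M J \<and> I \<subseteq> J \<longrightarrow> ind M I)
     \<and> (\<forall>I J. ind M I \<and> ind M J \<and> card I < card J \<longrightarrow> (\<exists>e\<in>J - I. ind M (insert e I)))"

definition rk :: "'a matroid \<Rightarrow> 'a set \<Rightarrow> nat" where
  "rk M X = Max (card ` {I. I \<subseteq> X \<and> ind M I})"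

definition contract :: "'a matroid \<Rightarrow> 'a set \<Rightarrow> 'a matroid" where
  "contract M X = (gr M - X, \<lambda>I. I \<subseteq> gr M - X \<and> rk M (I \<union> X) = card I + rk M X)"

definition delete :: "'a matroid \<Rightarrow> 'a set \<Rightarrow> 'a matroid" where
  "delete M X = (gr M - X, \<lambda>I. ind M I \<and> I \<inter> X = {})"

definition restrict :: "'a matroid \<Rightarrow> 'a set \<Rightarrow> 'a matroid" where
  "restrict M S = delete M (gr M - S)"

definition is_minor :: "'a matroid \<Rightarrow> 'a matroid \<Rightarrow> bool" where
  "is_minor M' M \<longleftrightarrow> (\<exists>C D. C \<subseteq> gr M \<and> D \<subseteq> gr M \<and> C \<inter> D = {} \<and> M' = delete (contract M C) D)"

definition iso :: "'a matroid \<Rightarrow> 'b matroid \<Rightarrow> bool" where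
  "iso M N \<longleftrightarrow> (\<exists>f. bij_betw f (gr M) (gr N) \<and> (\<forall>I\<subseteq>gr M. ind M I \<longleftrightarrow> ind N (f ` I)))"

definition has_minor :: "'a matroid \<Rightarrow> 'b matroid \<Rightarrow> bool" where
  "has_minor M N \<longleftrightarrow> (\<exists>M'. is_minor M' M \<and> iso M' N)"

definition separation :: "'a matroid \<Rightarrow> nat \<Rightarrow> 'a set \<Rightarrow> 'a set \<Rightarrow> bool" where
  "separation M k A B \<longleftrightarrow> A \<union> B = gr M \<and> A \<inter> B = {} \<and> card A \<ge> k \<and> card B \<ge> k
     \<and> rk M A + rk M B + 1 \<le> rk M (gr M) + k"

definition n_connected :: "'a matroid \<Rightarrow> nat \<Rightarrow> bool" where
  "n_connected M n \<longleftrightarrow> (\<forall>k. 1 \<le> k \<and> k < n \<longrightarrow> \<not> (\<exists>A B. separation M k A B))"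

definition simple :: "'a matroid \<Rightarrow> bool" where
  "simple M \<longleftrightarrow> (\<forall>X\<subseteq>gr M. card X \<le> 2 \<longrightarrow> ind M X)"

definition basis :: "'a matroid \<Rightarrow> 'a set \<Rightarrow> bool" where
  "basis M B \<longleftrightarrow> ind M B \<and> (\<forall>X. ind M X \<and> B \<subseteq> X \<longrightarrow> X = B)"

definition circuit :: "'a matroid \<Rightarrow> 'a set \<Rightarrow> bool" where
  "circuit M C \<longleftrightarrow> C \<subseteq> gr M \<and> \<not> ind M C \<and> (\<forall>x\<in>C. ind M (C - {x}))"

definition dual :: "'a matroid \<Rightarrow> 'a matroid" where
  "dual M = (gr M, \<lambda>I. I \<subseteq> gr M \<and> (\<exists>B. basis M B \<and> I \<inter> B = {}))"

definition cocircuit :: "'a matroid \<Rightarrow> 'a set \<Rightarrow> bool" where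
  "cocircuit M C \<longleftrightarrow> circuit (dual M) C"

text \<open>S is the ground set of a simplification of M: no loops, one element from each
  parallel class of non-loops.\<close>
definition is_simplification :: "'a matroid \<Rightarrow> 'a set \<Rightarrow> bool" where
  "is_simplification M S \<longleftrightarrow> S \<subseteq> gr M \<and> (\<forall>s\<in>S. ind M {s})
     \<and> (\<forall>s\<in>S. \<forall>t\<in>S. s \<noteq> t \<longrightarrow> ind M {s, t})
     \<and> (\<forall>e\<in>gr M. ind M {e} \<longrightarrow> (\<exists>s\<in>S. e = s \<or> \<not> ind M {e, s}))"

definition N_contractible :: "'a matroid \<Rightarrow> 'b matroid \<Rightarrow> 'a \<Rightarrow> bool" where
  "N_contractible M N x \<longleftrightarrow> x \<in> gr M \<and> n_connected (contract M {x}) 3 \<and> has_minor (contract M {x}) N"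

definition vert_N_contractible :: "'a matroid \<Rightarrow> 'b matroid \<Rightarrow> 'a set \<Rightarrow> bool" where
  "vert_N_contractible M N Y \<longleftrightarrow> Y \<subseteq> gr M \<and>
     (\<exists>S. is_simplification (contract M Y) S
        \<and> n_connected (restrict (contract M Y) S) 3 \<and> has_minor (restrict (contract M Y) S) N)"

text \<open>N-carambole x_0..x_{n-1}, y_0..y_{n-1} (0-indexed).\<close>
definition carambole :: "'a matroid \<Rightarrow> 'b matroid \<Rightarrow> nat \<Rightarrow> (nat \<Rightarrow> 'a) \<Rightarrow> (nat \<Rightarrow> 'a) \<Rightarrow> bool" where
  "carambole M N n x y \<longleftrightarrow> n \<ge> 3 \<and> (\<forall>i<n. x i \<in> gr M \<and> y i \<in> gr M) \<and> inj_on y {..<n}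
     \<and> rk M (y ` {..<n}) = 2 \<and> vert_N_contractible M N (y ` {..<n})
     \<and> (\<forall>i<n. cocircuit M ((y ` {..<n} - {y i}) \<union> {x i}))"

definition hull :: "nat \<Rightarrow> (nat \<Rightarrow> 'a) \<Rightarrow> 'a set" where
  "hull n x = x ` {..<n}"

end

theory Submission
  imports Defs
begin


lemma gr_contract[simp]: "gr (contract M X) = gr M - X"
  by (simp add: contract_def gr_def)
lemma ind_contract: "ind (contract M X) I \<longleftrightarrow> I \<subseteq> gr M - X \<and> rk M (I \<union> X) = card I + rk M X"
  by (simp add: contract_def gr_def ind_def)
lemma gr_delete[simp]: "gr (delete M X) = gr M - X"
  by (simp add: delete_def gr_def)
lemma ind_delete: "ind (delete M X) I \<longleftrightarrow> ind M I \<and> I \<inter> X = {}"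
  by (simp add: delete_def gr_def ind_def)
lemma gr_dual[simp]: "gr (dual M) = gr M"
  by (simp add: dual_def gr_def)
lemma ind_dual: "ind (dual M) I \<longleftrightarrow> I \<subseteq> gr M \<and> (\<exists>B. basis M B \<and> I \<inter> B = {})"
  by (simp add: dual_def gr_def ind_def)

lemma rk_delete: "A \<inter> D = {} \<Longrightarrow> rk (delete M D) A = rk M A"
  unfolding rk_def ind_delete
proof -
  assume "A \<inter> D = {}"
  then have "{I. I \<subseteq> A \<and> ind M I \<and> I \<inter> D = {}} = {I. I \<subseteq> A \<and> ind M I}" by blast
  then show "Max (card ` {I. I \<subseteq> A \<and> ind M I \<and> I \<inter> D = {}}) = Max (card ` {I. I \<subseteq> A \<and> ind M I})" by simp
qed

locale matroid =
  fixes M :: "'a matroid"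
  assumes ism: "is_matroid M"
begin

abbreviation "E \<equiv> gr M"
abbreviation "r \<equiv> rk M"

lemma finE: "finite E" using ism by (simp add: is_matroid_def)
lemma ind_empty: "ind M {}" using ism by (simp add: is_matroid_def)
lemma ind_sub: "ind M I \<Longrightarrow> I \<subseteq> E" using ism by (simp add: is_matroid_def)
lemma ind_fin: "ind M I \<Longrightarrow> finite I" using ind_sub finE finite_subset by blast
lemma ind_mono: "ind M J \<Longrightarrow> I \<subseteq> J \<Longrightarrow> ind M I" using ism unfolding is_matroid_def by blast
lemma ind_aug: "ind M I \<Longrightarrow> ind M J \<Longrightarrow> card I < card J \<Longrightarrow> \<exists>e\<in>J - I. ind M (insert e I)"
  using ism unfolding is_matroid_def by blast

lemma fin_set: "finite {I. I \<subseteq> X \<and> ind M I}"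
proof -
  have "{I. I \<subseteq> X \<and> ind M I} \<subseteq> Pow E" using ind_sub by blast
  moreover have "finite (Pow E)" using finE by simp
  ultimately show ?thesis by (rule finite_subset)
qed

lemma rk_ge: "I \<subseteq> X \<Longrightarrow> ind M I \<Longrightarrow> card I \<le> r X"
  unfolding rk_def using fin_set by (intro Max_ge) auto

lemma rk_obtain: "\<exists>I. I \<subseteq> X \<and> ind M I \<and> card I = r X"
proof -
  have "r X \<in> card ` {I. I \<subseteq> X \<and> ind M I}"
    unfolding rk_def using fin_set ind_empty by (intro Max_in) auto
  then show ?thesis by auto
qed

lemma rk_le_card: "finite X \<Longrightarrow> r X \<le> card X"
proof -
  assume f: "finite X"
  obtain I where I: "I \<subseteq> X" "ind M I" "card I = r X" using rk_obtain by blast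
  show ?thesis using card_mono[OF f I(1)] I(3) by simp
qed

lemma rk_mono: "X \<subseteq> Y \<Longrightarrow> r X \<le> r Y"
proof -
  assume f: "X \<subseteq> Y"
  obtain I where I: "I \<subseteq> X" "ind M I" "card I = r X" using rk_obtain by blast
  show ?thesis using rk_ge[of I Y] I f by simp
qed

lemma rk_empty: "r {} = 0"
  using rk_le_card[of "{}"] by simp

lemma extend: "ind M I \<Longrightarrow> I \<subseteq> X \<Longrightarrow> \<exists>J. I \<subseteq> J \<and> J \<subseteq> X \<and> ind M J \<and> card J = r X"
proof (induction "r X - card I" arbitrary: I rule: less_induct)
  case less
  have le: "card I \<le> r X" using rk_ge less.prems by blast
  show ?case
  proof (cases "card I = r X")
    case True then show ?thesis using less.prems by blast
  next
    case False
    then have lt: "card I < r X" using le by simp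
    obtain K where K: "K \<subseteq> X" "ind M K" "card K = r X" using rk_obtain by blast
    have "card I < card K" using lt K(3) by simp
    then obtain e where e: "e \<in> K - I" "ind M (insert e I)" using ind_aug[OF less.prems(1) K(2)] by blast
    have fI: "finite I" using ind_fin less.prems by blast
    have c: "card (insert e I) = Suc (card I)" using e fI by simp
    have "insert e I \<subseteq> X" using e K less.prems by blast
    moreover have "r X - card (insert e I) < r X - card I" using c lt by simp
    ultimately have "\<exists>J. insert e I \<subseteq> J \<and> J \<subseteq> X \<and> ind M J \<and> card J = r X"
      using less.hyps[of "insert e I"] e(2) by simp
    then show ?thesis by blast
  qed
qed

lemma submod: "r (A \<union> B) + r (A \<inter> B) \<le> r A + r B"
proof -
  obtain I where I: "I \<subseteq> A \<inter> B" "ind M I" "card I = r (A \<inter> B)" using rk_obtain by blast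
  obtain J where J: "I \<subseteq> J" "J \<subseteq> A \<union> B" "ind M J" "card J = r (A \<union> B)"
    using extend[OF I(2), of "A \<union> B"] I(1) by blast
  have fJ: "finite J" using J ind_fin by blast
  have i1: "ind M (J \<inter> A)" "ind M (J \<inter> B)" "ind M (J \<inter> A \<inter> B)"
    using ind_mono[OF J(3), of "J \<inter> A"] ind_mono[OF J(3), of "J \<inter> B"] ind_mono[OF J(3), of "J \<inter> A \<inter> B"] by auto
  have "card (J \<inter> A \<inter> B) \<le> card I" using rk_ge[of "J \<inter> A \<inter> B" "A \<inter> B"] i1 I by auto
  moreover have "I \<subseteq> J \<inter> A \<inter> B" using I J by blast
  ultimately have eq0: "I = J \<inter> A \<inter> B" using card_seteq[of "J \<inter> A \<inter> B" I] fJ by simp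
  then have eq: "J \<inter> A \<inter> B = I" by simp
  have cu: "card (J \<inter> A) + card (J \<inter> B) = card ((J \<inter> A) \<union> (J \<inter> B)) + card ((J \<inter> A) \<inter> (J \<inter> B))"
    using fJ by (intro card_Un_Int) auto
  have u: "(J \<inter> A) \<union> (J \<inter> B) = J" using J by blast
  have ii: "(J \<inter> A) \<inter> (J \<inter> B) = I" using eq by blast
  have cc: "card (J \<inter> A) + card (J \<inter> B) = card J + card I" using cu unfolding u ii .
  have "card (J \<inter> A) \<le> r A" "card (J \<inter> B) \<le> r B" using rk_ge i1 by auto
  then show ?thesis using cc I(3) J(4) by linarith
qed

lemma subadd: "r (A \<union> B) \<le> r A + r B"
  using submod[of A B] by linarith

lemma rk_single_le: "r {z} \<le> 1"
  using rk_le_card[of "{z}"] by simp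

lemma rk_insert_le: "r (insert z A) \<le> Suc (r A)"
proof -
  have "r (insert z A) \<le> r {z} + r A" using subadd[of "{z}" A] by simp
  then show ?thesis using rk_single_le[of z] by linarith
qed

lemma ind_iff_rk: "I \<subseteq> E \<Longrightarrow> ind M I \<longleftrightarrow> r I = card I"
proof
  assume "I \<subseteq> E" "ind M I"
  then show "r I = card I" using rk_ge[of I I] rk_le_card[of I] ind_fin[of I] by simp
next
  assume a: "I \<subseteq> E" "r I = card I"
  obtain J where J: "J \<subseteq> I" "ind M J" "card J = r I" using rk_obtain by blast
  have "finite I" using a finE finite_subset by blast
  then have "J = I" using J a card_subset_eq[of I J] by simp
  then show "ind M I" using J by simp
qed

lemma basis_card: "basis M B \<Longrightarrow> card B = r E"
proof -
  assume b: "basis M B"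
  then have iB: "ind M B" and mx: "\<And>X. ind M X \<Longrightarrow> B \<subseteq> X \<Longrightarrow> X = B" unfolding basis_def by auto
  have le: "card B \<le> r E" using rk_ge iB ind_sub by blast
  show ?thesis
  proof (rule ccontr)
    assume "card B \<noteq> r E"
    then have lt: "card B < r E" using le by simp
    obtain K where K: "K \<subseteq> E" "ind M K" "card K = r E" using rk_obtain by blast
    obtain e where e: "e \<in> K - B" "ind M (insert e B)" using ind_aug[OF iB K(2)] lt K(3) by auto
    then show False using mx[of "insert e B"] by blast
  qed
qed

lemma dual_ind_rk: "I \<subseteq> E \<Longrightarrow> (\<exists>B. basis M B \<and> I \<inter> B = {}) \<longleftrightarrow> r (E - I) = r E"
proof
  assume "I \<subseteq> E" "\<exists>B. basis M B \<and> I \<inter> B = {}"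
  then obtain B where B: "basis M B" "I \<inter> B = {}" by blast
  have "B \<subseteq> E - I" using B ind_sub unfolding basis_def by blast
  then have "r E \<le> r (E - I)" using rk_ge[of B "E - I"] B basis_card unfolding basis_def by auto
  moreover have "r (E - I) \<le> r E" using rk_mono by blast
  ultimately show "r (E - I) = r E" by simp
next
  assume a: "I \<subseteq> E" "r (E - I) = r E"
  obtain J where J: "J \<subseteq> E - I" "ind M J" "card J = r (E - I)" using rk_obtain by blast
  have "basis M J" unfolding basis_def
  proof (intro conjI allI impI)
    show "ind M J" by fact
    fix X assume X: "ind M X \<and> J \<subseteq> X"
    have "card X \<le> r E" using rk_ge X ind_sub by blast
    then have "card X \<le> card J" using J a by simp
    then show "X = J" using X ind_fin[of X] card_seteq[of X J] by simp
  qed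
  then show "\<exists>B. basis M B \<and> I \<inter> B = {}" using J by blast
qed

lemma cocircuit_rk:
  assumes "cocircuit M C"
  shows "C \<subseteq> E" "r (E - C) < r E" "\<And>z. z \<in> C \<Longrightarrow> r (insert z (E - C)) = r E"
proof -
  have c: "C \<subseteq> E" "\<not> ind (dual M) C" "\<And>z. z \<in> C \<Longrightarrow> ind (dual M) (C - {z})"
    using assms unfolding cocircuit_def circuit_def by auto
  show "C \<subseteq> E" by fact
  have "\<not> (\<exists>B. basis M B \<and> C \<inter> B = {})" using c(1,2) ind_dual[of M C] by simp
  then have "r (E - C) \<noteq> r E" using c(1) dual_ind_rk[of C] by simp
  then show "r (E - C) < r E" using rk_mono[of "E - C" E] by auto
  fix z assume z: "z \<in> C"
  have "\<exists>B. basis M B \<and> (C - {z}) \<inter> B = {}" using c(3)[OF z] ind_dual[of M "C - {z}"] by simp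
  then have "r (E - (C - {z})) = r E" using c(1) dual_ind_rk[of "C - {z}"] by auto
  moreover have "E - (C - {z}) = insert z (E - C)" using z c(1) by blast
  ultimately show "r (insert z (E - C)) = r E" by simp
qed

lemma K1:
  assumes "cocircuit M C" "A \<inter> C = {}" "A \<subseteq> E" "z \<in> C"
  shows "r (insert z A) = Suc (r A)"
proof -
  let ?H = "E - C"
  have AH: "A \<subseteq> ?H" using assms by blast
  have "r (insert z A \<union> ?H) + r (insert z A \<inter> ?H) \<le> r (insert z A) + r ?H" by (rule submod)
  moreover have "insert z A \<union> ?H = insert z ?H" using AH by blast
  moreover have "insert z A \<inter> ?H = A" using AH assms(4) by blast
  ultimately have "r (insert z ?H) + r A \<le> r (insert z A) + r ?H" by simp
  then have "r E + r A \<le> r (insert z A) + r ?H" using cocircuit_rk(3)[OF assms(1,4)] by simp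
  then have "r (insert z A) \<ge> Suc (r A)" using cocircuit_rk(2)[OF assms(1)] by linarith
  then show ?thesis using rk_insert_le[of z A] by simp
qed

lemma rk_contract:
  assumes "X \<subseteq> E" "A \<subseteq> E - X"
  shows "rk (contract M X) A = r (A \<union> X) - r X"
  unfolding rk_def[of "contract M X"] ind_contract
proof (rule Max_eqI)
  have "{I. I \<subseteq> A \<and> I \<subseteq> E - X \<and> r (I \<union> X) = card I + r X} \<subseteq> Pow A" by blast
  moreover have "finite A" using assms finE finite_subset by blast
  ultimately show "finite (card ` {I. I \<subseteq> A \<and> I \<subseteq> E - X \<and> r (I \<union> X) = card I + r X})"
    using finite_subset[of _ "Pow A"] by (meson finite_Pow_iff finite_imageI)
next
  fix c assume "c \<in> card ` {I. I \<subseteq> A \<and> I \<subseteq> E - X \<and> r (I \<union> X) = card I + r X}"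
  then obtain I where I: "I \<subseteq> A" "r (I \<union> X) = card I + r X" "c = card I" by blast
  have "I \<union> X \<subseteq> A \<union> X" using I by blast
  then have "r (I \<union> X) \<le> r (A \<union> X)" by (rule rk_mono)
  then show "c \<le> r (A \<union> X) - r X" using I by linarith
next
  obtain B where B: "B \<subseteq> X" "ind M B" "card B = r X" using rk_obtain by blast
  obtain J where J: "B \<subseteq> J" "J \<subseteq> A \<union> X" "ind M J" "card J = r (A \<union> X)"
    using extend[OF B(2), of "A \<union> X"] B(1) by blast
  have fJ: "finite J" using J ind_fin by blast
  have "ind M (J \<inter> X)" using ind_mono[OF J(3)] by blast
  then have "card (J \<inter> X) \<le> r X" using rk_ge[of "J \<inter> X" X] by blast
  moreover have "B \<subseteq> J \<inter> X" using B J by blast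
  ultimately have JX: "B = J \<inter> X" using B fJ card_seteq[of "J \<inter> X" B] by simp
  let ?I = "J \<inter> A"
  have AX: "A \<inter> X = {}" using assms by blast
  have Jsplit: "J = ?I \<union> B" using J JX by blast
  have disj: "?I \<inter> B = {}" using AX B by blast
  have fIB: "finite ?I" "finite B" using fJ J(1) finite_subset by auto
  have "card (?I \<union> B) = card ?I + card B" using disj fIB by (intro card_Un_disjoint) auto
  then have cJ: "card J = card ?I + r X" using Jsplit B(3) by simp
  have "r (?I \<union> X) \<ge> card J" using rk_ge[of J "?I \<union> X"] J Jsplit B by blast
  moreover have "r (?I \<union> X) \<le> card ?I + r X" using subadd[of ?I X] rk_le_card[of ?I] fJ by simp
  ultimately have eq: "r (?I \<union> X) = card ?I + r X" using cJ by linarith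
  have "?I \<subseteq> A" "?I \<subseteq> E - X" using assms by auto
  moreover have "r (A \<union> X) - r X = card ?I" using cJ J(4) by simp
  ultimately show "r (A \<union> X) - r X \<in> card ` {I. I \<subseteq> A \<and> I \<subseteq> E - X \<and> r (I \<union> X) = card I + r X}"
    using eq by blast
qed

end


locale carctx = matroid M for M :: "'a matroid" +
  fixes n :: nat and x y :: "nat \<Rightarrow> 'a"
  assumes conn: "n_connected M 3" and simp: "simple M" and rk4: "4 \<le> rk M (gr M)"
    and n3: "3 \<le> n" and xE: "\<And>i. i < n \<Longrightarrow> x i \<in> gr M" and yE: "\<And>i. i < n \<Longrightarrow> y i \<in> gr M"
    and injy: "inj_on y {..<n}" and rkL: "rk M (y ` {..<n}) = 2"
    and coc: "\<And>i. i < n \<Longrightarrow> cocircuit M ((y ` {..<n} - {y i}) \<union> {x i})"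
begin

abbreviation "L \<equiv> y ` {..<n}"
definition "C i = (L - {y i}) \<union> {x i}"

lemma sep2_false:
  assumes "P \<union> Q = E" "P \<inter> Q = {}" "2 \<le> card P" "2 \<le> card Q" "r P + r Q \<le> Suc (r E)"
  shows False
proof -
  have "\<not> separation M 2 P Q" using conn unfolding n_connected_def by auto
  then show False using assms unfolding separation_def by auto
qed

lemma rk1: "a \<in> E \<Longrightarrow> r {a} = 1"
  using simp ind_iff_rk[of "{a}"] unfolding simple_def by auto

lemma rk2: "a \<in> E \<Longrightarrow> b \<in> E \<Longrightarrow> a \<noteq> b \<Longrightarrow> r {a, b} = 2"
  using simp ind_iff_rk[of "{a, b}"] unfolding simple_def by auto

lemma LE: "L \<subseteq> E" using yE by blast
lemma finL: "finite L" by simp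
lemma cardL: "card L = n" using injy by (simp add: card_image)
lemma yeq: "i < n \<Longrightarrow> j < n \<Longrightarrow> y i = y j \<longleftrightarrow> i = j"
  using injy unfolding inj_on_def by blast

lemma span:
  assumes "a \<in> Z \<inter> L" "b \<in> Z \<inter> L" "a \<noteq> b"
  shows "r (Z \<union> L) = r Z"
proof -
  have "r (Z \<union> L) + r (Z \<inter> L) \<le> r Z + r L" by (rule submod)
  moreover have "r {a, b} \<le> r (Z \<inter> L)" using assms by (intro rk_mono) auto
  moreover have "r {a, b} = 2" using assms LE by (intro rk2) auto
  moreover have "r Z \<le> r (Z \<union> L)" by (rule rk_mono) auto
  ultimately show ?thesis using rkL by linarith
qed

lemma rEL: "r (E - L) = r E"
proof (rule ccontr)
  assume a: "r (E - L) \<noteq> r E"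
  have "r (E - L) \<le> r E" by (rule rk_mono) auto
  then have lt: "r (E - L) < r E" using a by simp
  have "L \<union> (E - L) = E" using LE by blast
  then have "r E \<le> r L + r (E - L)" using subadd[of L "E - L"] by simp
  moreover have "r (E - L) \<le> card (E - L)" using finE by (intro rk_le_card) auto
  ultimately have c2: "2 \<le> card (E - L)" using rk4 rkL by linarith
  show False
    by (rule sep2_false[of L "E - L"]) (use LE cardL n3 c2 lt rkL in auto)
qed

lemma cardEL: "4 \<le> card (E - L)"
proof -
  have "r (E - L) \<le> card (E - L)" using finE by (intro rk_le_card) auto
  then show ?thesis using rEL rk4 by linarith
qed

lemma cocC: "i < n \<Longrightarrow> cocircuit M (C i)"
  using coc unfolding C_def by blast

lemma K1C: "i < n \<Longrightarrow> A \<inter> C i = {} \<Longrightarrow> A \<subseteq> E \<Longrightarrow> z \<in> C i \<Longrightarrow> r (insert z A) = Suc (r A)"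
  using K1 cocC by blast

lemma xnotL: "i < n \<Longrightarrow> x i \<notin> L"
proof
  assume i: "i < n" and xl: "x i \<in> L"
  then have "C i \<subseteq> L" unfolding C_def by blast
  then have "r (E - L) \<le> r (E - C i)" by (intro rk_mono) auto
  moreover have "r (E - C i) < r E" using cocircuit_rk(2)[OF cocC[OF i]] .
  ultimately show False using rEL by simp
qed

lemma indX_aux: "F \<subseteq> x ` {..<n} \<Longrightarrow> r F = card F"
proof -
  assume F: "F \<subseteq> x ` {..<n}"
  have "finite F" using F finite_subset by blast
  then show ?thesis using F
  proof (induction F rule: finite_induct)
    case empty then show ?case using rk_empty by simp
  next
    case (insert z F)
    obtain i where i: "i < n" "z = x i" using insert.prems by blast
    have FE: "F \<subseteq> E" using insert.prems xE by blast
    have "F \<inter> C i = {}"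
    proof -
      have "w \<notin> C i" if w: "w \<in> F" for w
      proof -
        obtain j where j: "j < n" "w = x j" using w insert.prems by blast
        have "w \<notin> L" using xnotL j by simp
        moreover have "w \<noteq> x i" using w insert.hyps i by blast
        ultimately show ?thesis unfolding C_def by blast
      qed
      then show ?thesis by blast
    qed
    moreover have "z \<in> C i" unfolding C_def using i by simp
    ultimately have "r (insert z F) = Suc (r F)" using K1C[OF i(1) _ FE] by blast
    then show ?case using insert by simp
  qed
qed

lemma indX: "ind M (x ` {..<n})"
proof -
  have "x ` {..<n} \<subseteq> E" using xE by blast
  then show ?thesis using ind_iff_rk indX_aux by blast
qed

end


context carctx begin

lemma two_elems: "finite S \<Longrightarrow> 2 \<le> card S \<Longrightarrow> \<exists>a b. a \<in> S \<and> b \<in> S \<and> a \<noteq> b"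
proof -
  assume "finite S" "2 \<le> card S"
  then have "\<not> card S \<le> Suc 0" by simp
  then show ?thesis using card_le_Suc0_iff_eq[OF \<open>finite S\<close>] by blast
qed

lemma meet:
  assumes i: "i < n" and A: "A \<subseteq> E - {x i}" and eq: "r (A \<union> {x i}) = r A"
  shows "\<exists>w\<in>A. w \<in> L \<and> w \<noteq> y i"
proof (rule ccontr)
  assume "\<not> ?thesis"
  then have "A \<inter> C i = {}" using A unfolding C_def by blast
  moreover have "x i \<in> C i" unfolding C_def by simp
  ultimately have "r (insert (x i) A) = Suc (r A)" using K1C[OF i] A by blast
  then show False using eq by simp
qed

lemma H1:
  assumes i: "i < n" and part: "A \<union> B = E - {x i}" "A \<inter> B = {}"
    and eqA: "r (A \<union> {x i}) = r A" and ineq: "r A + r (B \<union> {x i}) \<le> r E + 2"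
    and ab: "a \<in> A \<inter> L" "b \<in> A \<inter> L" "a \<noteq> b"
  shows "card (B - L) \<le> 1"
proof (rule ccontr)
  assume "\<not> card (B - L) \<le> 1"
  then have cB: "2 \<le> card (B - L)" by simp
  let ?A' = "A \<union> L \<union> {x i}" and ?B' = "B - L"
  have xiE: "x i \<in> E" using xE i by simp
  have u: "?A' \<union> ?B' = E" using part xiE LE by blast
  have d: "?A' \<inter> ?B' = {}" using part by blast
  have fA': "finite ?A'" using u finE finite_Un[of ?A' ?B'] by simp
  have "{a, b} \<subseteq> ?A'" using ab by blast
  then have "card {a, b} \<le> card ?A'" using card_mono[OF fA'] by blast
  then have cA: "2 \<le> card ?A'" using ab by simp
  have rAL: "r (A \<union> L) = r A" using span ab by blast
  have eqs: "(A \<union> L) \<union> (A \<union> {x i}) = ?A'" by blast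
  have "r ?A' + r ((A \<union> L) \<inter> (A \<union> {x i})) \<le> r (A \<union> L) + r (A \<union> {x i})"
    using submod[of "A \<union> L" "A \<union> {x i}"] unfolding eqs .
  moreover have "r A \<le> r ((A \<union> L) \<inter> (A \<union> {x i}))" by (rule rk_mono) blast
  ultimately have rA': "r ?A' \<le> r A" using rAL eqA by linarith
  have "\<not> (r ?A' + r ?B' \<le> Suc (r E))" using sep2_false[OF u d cA cB] by blast
  then have ge: "r (B \<union> {x i}) \<le> r ?B'" using rA' ineq by linarith
  have "?B' \<inter> C i = {}" using part unfolding C_def by blast
  moreover have "?B' \<subseteq> E" using part by blast
  moreover have "x i \<in> C i" unfolding C_def by simp
  ultimately have "r (insert (x i) ?B') = Suc (r ?B')" using K1C[OF i] by blast
  moreover have "r (insert (x i) ?B') \<le> r (B \<union> {x i})" by (rule rk_mono) blast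
  ultimately show False using ge by linarith
qed

lemma H2:
  assumes i: "i < n" and j: "j < n" "j \<noteq> i" and b: "b \<in> E" "b \<notin> L" "b \<noteq> x i"
    and r3: "r {y j, b, x i} \<le> 2"
  shows False
proof -
  have "\<exists>k::nat. k < 3 \<and> k \<noteq> i \<and> k \<noteq> j" by presburger
  then obtain k where k: "k < n" "k \<noteq> i" "k \<noteq> j" using n3 by (meson less_le_trans)
  have xiE: "x i \<in> E" using xE i by simp
  have xiL: "x i \<notin> L" using xnotL i by simp
  have yjE: "y j \<in> E" using yE j by simp
  have xk: "x k = x i \<or> x k = b"
  proof (rule ccontr)
    assume nk: "\<not> ?thesis"
    have "{x i, b} \<inter> C k = {}" using nk xiL b unfolding C_def by auto
    moreover have "y j \<in> C k" unfolding C_def using yeq[OF j(1) k(1)] j k by auto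
    ultimately have "r (insert (y j) {x i, b}) = Suc (r {x i, b})" using K1C[OF k(1)] xiE b by blast
    moreover have "r {x i, b} = 2" using rk2 xiE b by auto
    moreover have "insert (y j) {x i, b} = {y j, b, x i}" by blast
    ultimately show False using r3 by simp
  qed
  let ?Q = "E - L - {x i, b}" and ?P = "L \<union> {x i, b}"
  have QE: "?Q \<subseteq> E" by blast
  have "?Q \<inter> C k = {}" using xk unfolding C_def by auto
  moreover have "y i \<in> C k" unfolding C_def using yeq[OF i k(1)] k i by auto
  ultimately have s1: "r (insert (y i) ?Q) = Suc (r ?Q)" using K1C[OF k(1)] QE by blast
  have yiE: "y i \<in> E" using yE i by simp
  have "insert (y i) ?Q \<inter> C i = {}" using xiL i unfolding C_def by auto
  moreover have "y j \<in> C i" unfolding C_def using yeq[OF j(1) i] j i by auto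
  ultimately have s2: "r (insert (y j) (insert (y i) ?Q)) = Suc (r (insert (y i) ?Q))"
    using K1C[OF i] QE yiE by blast
  have "r (insert (y j) (insert (y i) ?Q)) \<le> r E" by (rule rk_mono) (use yiE yjE in blast)
  then have rQ: "r ?Q + 2 \<le> r E" using s1 s2 by simp
  have e1: "{y j, b, x i} \<union> L = ?P" using j by blast
  have e2: "{y j, b, x i} \<inter> L = {y j}" using j b xiL by auto
  have "r ?P + r {y j} \<le> r {y j, b, x i} + r L" using submod[of "{y j, b, x i}" L] unfolding e1 e2 .
  moreover have "r {y j} = 1" using rk1 yjE by simp
  ultimately have rP: "r ?P \<le> 3" using r3 rkL by linarith
  have u: "?P \<union> ?Q = E" using LE xiE b by blast
  have d: "?P \<inter> ?Q = {}" by blast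
  have "L \<subseteq> ?P" by blast
  then have cP: "2 \<le> card ?P" using cardL n3 card_mono[of ?P L] by force
  have cQ: "2 \<le> card ?Q"
  proof (rule ccontr)
    assume "\<not> ?thesis"
    then have "card ?Q \<le> 1" by simp
    moreover have "E - L \<subseteq> ?Q \<union> {x i, b}" by blast
    moreover have "finite ?Q" using finE by simp
    ultimately have c1: "card (E - L) \<le> card (?Q \<union> {x i, b})" by (intro card_mono) auto
    have c2: "card (?Q \<union> {x i, b}) \<le> card ?Q + card {x i, b}" by (rule card_Un_le)
    have c3: "card {x i, b} \<le> 2" by (cases "x i = b") auto
    have "card (E - L) \<le> 3" using c1 c2 c3 \<open>card ?Q \<le> 1\<close> by linarith
    then show False using cardEL by simp
  qed
  show False using sep2_false[OF u d cP cQ] rP rQ by linarith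
qed


lemma k2_oriented:
  assumes i: "i < n" and part: "A \<union> B = E - {x i}" "A \<inter> B = {}"
    and cA: "2 \<le> card A" and cB: "2 \<le> card B"
    and eA: "r (A \<union> {x i}) = r A" and eB: "r (B \<union> {x i}) = r B"
    and ineq: "r A + r B \<le> r E + 2" and AL: "2 \<le> card (A \<inter> L)"
  shows False
proof -
  have "A \<subseteq> E" "B \<subseteq> E" using part by auto
  then have finA: "finite A" and finB: "finite B" using finite_subset[OF _ finE] by auto
  obtain a b where ab: "a \<in> A \<inter> L" "b \<in> A \<inter> L" "a \<noteq> b" using two_elems[of "A \<inter> L"] AL finA by auto
  have BL1: "card (B - L) \<le> 1" using H1[OF i part eA _ ab] ineq eB by simp
  have Bsub: "B \<subseteq> E - {x i}" using part by blast
  obtain w where w: "w \<in> B" "w \<in> L" "w \<noteq> y i" using meet[OF i Bsub eB] by blast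
  show False
  proof (cases "2 \<le> card (B \<inter> L)")
    case True
    obtain a' b' where ab': "a' \<in> B \<inter> L" "b' \<in> B \<inter> L" "a' \<noteq> b'" using two_elems[of "B \<inter> L"] True finB by auto
    have part': "B \<union> A = E - {x i}" "B \<inter> A = {}" using part by auto
    have AL1: "card (A - L) \<le> 1" using H1[OF i part' eB _ ab'] ineq eA by simp
    have sub: "E - L \<subseteq> (A - L) \<union> (B - L) \<union> {x i}" using part by blast
    have "card (E - L) \<le> card ((A - L) \<union> (B - L) \<union> {x i})" by (rule card_mono) (use finA finB sub in auto)
    also have "\<dots> \<le> card ((A - L) \<union> (B - L)) + card {x i}" by (rule card_Un_le)
    also have "\<dots> \<le> card (A - L) + card (B - L) + 1" using card_Un_le[of "A - L" "B - L"] by simp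
    finally show False using AL1 BL1 cardEL by linarith
  next
    case False
    have fBL: "finite (B \<inter> L)" using finB by simp
    have "card (B \<inter> L) \<le> Suc 0" using False by simp
    then have BLw: "B \<inter> L = {w}" using card_le_Suc0_iff_eq[OF fBL] w by blast
    have "B - L \<noteq> {}"
    proof
      assume "B - L = {}"
      then have "B = {w}" using BLw by blast
      then show False using cB by simp
    qed
    then obtain b' where b': "b' \<in> B - L" by blast
    have fBmL: "finite (B - L)" using finB by simp
    have "card (B - L) \<le> Suc 0" using BL1 by simp
    then have BmL: "B - L = {b'}" using card_le_Suc0_iff_eq[OF fBmL] b' by blast
    have Beq: "B = {w, b'}" using BLw BmL by blast
    obtain j where j: "j < n" "w = y j" using w by blast
    have jne: "j \<noteq> i" using w j by blast
    have bE: "b' \<in> E" "b' \<notin> L" "b' \<noteq> x i" using b' part by auto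
    have "r {y j, b', x i} = r (B \<union> {x i})" using Beq j by (simp add: insert_commute)
    also have "\<dots> = r B" by (rule eB)
    also have "\<dots> \<le> card B" using finB by (rule rk_le_card)
    also have "\<dots> \<le> 2" using Beq by (simp add: card_insert_if)
    finally show False using H2[OF i j(1) jne bE] by blast
  qed
qed

lemma rk_c:
  assumes i: "i < n" and Z: "Z \<subseteq> E - {x i}"
  shows "rk (contract M {x i}) Z = r (Z \<union> {x i}) - 1"
  using rk_contract[of "{x i}" Z] Z xE[OF i] rk1[OF xE[OF i]] by simp

lemma conn_contract:
  assumes i: "i < n"
  shows "n_connected (contract M {x i}) 3"
  unfolding n_connected_def
proof (intro allI impI notI)
  fix k assume k: "1 \<le> k \<and> k < (3::nat)"
  assume "\<exists>A B. separation (contract M {x i}) k A B"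
  then obtain A B where sep: "separation (contract M {x i}) k A B" by blast
  have xiE: "x i \<in> E" using xE i by simp
  have part: "A \<union> B = E - {x i}" "A \<inter> B = {}" and cA: "k \<le> card A" and cB: "k \<le> card B"
    and ine: "rk (contract M {x i}) A + rk (contract M {x i}) B + 1 \<le> rk (contract M {x i}) (E - {x i}) + k"
    using sep unfolding separation_def by auto
  have "A \<subseteq> E" "B \<subseteq> E" using part by auto
  then have finA: "finite A" and finB: "finite B" using finite_subset[OF _ finE] by auto
  have AS: "A \<subseteq> E - {x i}" and BS: "B \<subseteq> E - {x i}" using part by auto
  have "(E - {x i}) \<union> {x i} = E" using xiE by blast
  then have rcE: "rk (contract M {x i}) (E - {x i}) = r E - 1" using rk_c[OF i, of "E - {x i}"] by simp
  have g1: "1 \<le> r (A \<union> {x i})" "1 \<le> r (B \<union> {x i})" "1 \<le> r E"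
    using rk_mono[of "{x i}" "A \<union> {x i}"] rk_mono[of "{x i}" "B \<union> {x i}"] rk_mono[of "{x i}" E]
      rk1[OF xiE] xiE by auto
  have main: "r (A \<union> {x i}) + r (B \<union> {x i}) \<le> r E + k"
    using ine rk_c[OF i AS] rk_c[OF i BS] rcE g1 by linarith
  have mA: "r A \<le> r (A \<union> {x i})" and mB: "r B \<le> r (B \<union> {x i})" by (auto intro: rk_mono)
  have xA: "x i \<notin> A" and xB: "x i \<notin> B" using part by auto
  have cAx: "card (A \<union> {x i}) = Suc (card A)" and cBx: "card (B \<union> {x i}) = Suc (card B)"
    using finA finB xA xB by auto
  have uA: "A \<union> (B \<union> {x i}) = E" and dA: "A \<inter> (B \<union> {x i}) = {}" using part xiE by auto
  have uB: "(A \<union> {x i}) \<union> B = E" and dB: "(A \<union> {x i}) \<inter> B = {}" using part xiE by auto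
  show False
  proof (cases "k = 1")
    case True
    show False
    proof (cases "2 \<le> card A")
      case True
      have "2 \<le> card (B \<union> {x i})" using cBx cB \<open>k = 1\<close> by simp
      then show False using sep2_false[OF uA dA True] main mA \<open>k = 1\<close> by linarith
    next
      case cA1: False
      show False
      proof (cases "2 \<le> card B")
        case True
        have "2 \<le> card (A \<union> {x i})" using cAx cA \<open>k = 1\<close> by simp
        then show False using sep2_false[OF uB dB _ True] main mB \<open>k = 1\<close> by linarith
      next
        case False
        have "card E \<le> card (A \<union> (B \<union> {x i}))" using uA by simp
        also have "\<dots> \<le> card A + card (B \<union> {x i})" by (rule card_Un_le)
        finally have "card E \<le> 3" using cA1 False cBx by linarith
        moreover have "r E \<le> card E" using finE by (rule rk_le_card)
        ultimately show False using rk4 by linarith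
      qed
    qed
  next
    case False
    then have k2: "k = 2" using k by simp
    have cA2: "2 \<le> card A" and cB2: "2 \<le> card B" using cA cB k2 by auto
    have c1: "2 \<le> card (B \<union> {x i})" using cBx cB2 by simp
    have c2: "2 \<le> card (A \<union> {x i})" using cAx cA2 by simp
    have n1: "\<not> (r A + r (B \<union> {x i}) \<le> Suc (r E))" using sep2_false[OF uA dA cA2 c1] by blast
    have n2: "\<not> (r (A \<union> {x i}) + r B \<le> Suc (r E))" using sep2_false[OF uB dB c2 cB2] by blast
    have eA: "r (A \<union> {x i}) = r A" using n1 main mA k2 by linarith
    have eB: "r (B \<union> {x i}) = r B" using n2 main mB k2 by linarith
    have ineq: "r A + r B \<le> r E + 2" using main eA eB k2 by linarith
    have "L \<subseteq> E - {x i}" using LE xnotL[OF i] by blast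
    then have "L \<subseteq> A \<union> B" using part(1) by simp
    then have Lu: "L = (A \<inter> L) \<union> (B \<inter> L)" by blast
    have "card ((A \<inter> L) \<union> (B \<inter> L)) \<le> card (A \<inter> L) + card (B \<inter> L)" by (rule card_Un_le)
    then have "card L \<le> card (A \<inter> L) + card (B \<inter> L)" using Lu by simp
    then have "2 \<le> card (A \<inter> L) \<or> 2 \<le> card (B \<inter> L)" using cardL n3 by linarith
    then show False
    proof
      assume "2 \<le> card (A \<inter> L)"
      then show False using k2_oriented[OF i part cA2 cB2 eA eB ineq] by simp
    next
      assume BL2: "2 \<le> card (B \<inter> L)"
      have pB: "B \<union> A = E - {x i}" "B \<inter> A = {}" using part by auto
      have ineq': "r B + r A \<le> r E + 2" using ineq by simp
      show False using k2_oriented[OF i pB cB2 cA2 eB eA ineq' BL2] .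
    qed
  qed
qed

end


definition swp :: "'a \<Rightarrow> 'a \<Rightarrow> 'a \<Rightarrow> 'a" where
  "swp a b z = (if z = a then b else if z = b then a else z)"

lemma swp_swp[simp]: "swp a b (swp a b z) = z"
  unfolding swp_def by auto

lemma swp_inj: "inj (swp a b)"
  by (metis injI swp_swp)

lemma swp_img_img[simp]: "swp a b ` (swp a b ` A) = A"
  by (simp add: image_comp comp_def)

lemma gr_restrict[simp]: "gr (restrict M S) = gr M - (gr M - S)"
  by (simp add: restrict_def)
lemma ind_restrict: "ind (restrict M S) I \<longleftrightarrow> ind M I \<and> I \<inter> (gr M - S) = {}"
  by (simp add: restrict_def ind_delete)

context carctx begin

lemma KL:
  assumes i: "i < n" and j: "j < n" "j \<noteq> i" and Z: "Z \<subseteq> E - L"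
  shows "r (swp (x i) (y j) ` Z \<union> {y i, x i}) = r (Z \<union> L)"
proof -
  let ?s = "swp (x i) (y j)"
  have yiL: "y i \<in> L" and yjL: "y j \<in> L" using i j by auto
  have yjZ: "y j \<notin> Z" using Z yjL by blast
  have yij: "y i \<noteq> y j" using yeq[OF i j(1)] j by auto
  have xiL: "x i \<notin> L" using xnotL i by simp
  have ZE: "Z \<subseteq> E" using Z by blast
  have sp: "r (Z \<union> {y i, y j}) = r (Z \<union> L)"
  proof -
    have "r ((Z \<union> {y i, y j}) \<union> L) = r (Z \<union> {y i, y j})"
      using span[of "y i" "Z \<union> {y i, y j}" "y j"] yiL yjL yij by blast
    moreover have "(Z \<union> {y i, y j}) \<union> L = Z \<union> L" using yiL yjL by blast
    ultimately show ?thesis by simp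
  qed
  show ?thesis
  proof (cases "x i \<in> Z")
    case True
    have "?s ` Z \<union> {y i, x i} = Z \<union> {y i, y j}"
    proof
      show "?s ` Z \<union> {y i, x i} \<subseteq> Z \<union> {y i, y j}" using True unfolding swp_def by auto
      show "Z \<union> {y i, y j} \<subseteq> ?s ` Z \<union> {y i, x i}"
      proof
        fix z assume z: "z \<in> Z \<union> {y i, y j}"
        show "z \<in> ?s ` Z \<union> {y i, x i}"
        proof (cases "z = y j")
          case True
          then have "z = ?s (x i)" unfolding swp_def by simp
          then show ?thesis using \<open>x i \<in> Z\<close> by blast
        next
          case False
          show ?thesis
          proof (cases "z \<in> Z \<and> z \<noteq> x i")
            case True
            then have "z = ?s z" using yjZ unfolding swp_def by auto
            then show ?thesis using True by blast
          next
            case False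
            then show ?thesis using z \<open>z \<noteq> y j\<close> by auto
          qed
        qed
      qed
    qed
    then show ?thesis using sp by simp
  next
    case False
    have sZ: "?s ` Z = Z"
    proof -
      have "?s z = z" if "z \<in> Z" for z using that False yjZ unfolding swp_def by auto
      then show ?thesis by (simp add: image_cong[of Z Z ?s id])
    qed
    have d: "insert (y i) Z \<inter> C i = {}" using Z False xiL yiL unfolding C_def by auto
    have e: "insert (y i) Z \<subseteq> E" using ZE yiL LE by blast
    have "r (insert (x i) (insert (y i) Z)) = Suc (r (insert (y i) Z))"
      using K1C[OF i d e] unfolding C_def by simp
    moreover have "r (insert (y j) (insert (y i) Z)) = Suc (r (insert (y i) Z))"
      using K1C[OF i d e] yjL yij unfolding C_def by simp
    moreover have "?s ` Z \<union> {y i, x i} = insert (x i) (insert (y i) Z)" using sZ by blast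
    moreover have "Z \<union> {y i, y j} = insert (y j) (insert (y i) Z)" by blast
    ultimately show ?thesis using sp by simp
  qed
qed


lemma minor_transfer:
  assumes i: "i < n" and j: "j < n" "j \<noteq> i"
    and hm: "has_minor (restrict (contract M L) S) N"
  shows "has_minor (contract M {x i}) N"
proof -
  let ?s = "swp (x i) (y j)"
  let ?M2 = "restrict (contract M L) S"
  obtain N0 where mN0: "is_minor N0 ?M2" and isoN0: "iso N0 N" using hm unfolding has_minor_def by blast
  obtain Cc D where CD: "Cc \<subseteq> gr ?M2" "D \<subseteq> gr ?M2" "Cc \<inter> D = {}" and N0: "N0 = delete (contract ?M2 Cc) D"
    using mN0 unfolding is_minor_def by blast
  obtain f0 where f0: "bij_betw f0 (gr N0) (gr N)" and f0i: "\<And>I. I \<subseteq> gr N0 \<Longrightarrow> ind N0 I \<longleftrightarrow> ind N (f0 ` I)"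
    using isoN0 unfolding iso_def by blast
  have yiL: "y i \<in> L" and yjL: "y j \<in> L" using i j by auto
  have yij: "y i \<noteq> y j" using yeq[OF i j(1)] j by auto
  have xiL: "x i \<notin> L" using xnotL i by simp
  have xiE: "x i \<in> E" using xE i by simp
  have W: "gr ?M2 = (E - L) - ((E - L) - S)" by simp
  have WEL: "gr ?M2 \<subseteq> E - L" by simp
  let ?G = "gr N0"
  have G: "?G = gr ?M2 - Cc - D" using N0 by simp
  have rkL2: "2 \<le> r (Z \<union> L)" for Z
  proof -
    have "r L \<le> r (Z \<union> L)" by (rule rk_mono) blast
    then show ?thesis using rkL by simp
  qed
  have rkM2: "rk ?M2 Z = r (Z \<union> L) - 2" if "Z \<subseteq> gr ?M2" for Z
  proof -
    have "rk ?M2 Z = rk (contract M L) Z"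
      unfolding restrict_def using that by (subst rk_delete) auto
    also have "\<dots> = r (Z \<union> L) - r L" using that LE by (intro rk_contract) auto
    finally show ?thesis using rkL by simp
  qed
  have indN0: "ind N0 I \<longleftrightarrow> r (I \<union> Cc \<union> L) = card I + r (Cc \<union> L)" if I: "I \<subseteq> ?G" for I
  proof -
    have "ind N0 I \<longleftrightarrow> (I \<subseteq> gr ?M2 - Cc \<and> rk ?M2 (I \<union> Cc) = card I + rk ?M2 Cc) \<and> I \<inter> D = {}"
      using N0 by (simp add: ind_delete ind_contract)
    also have "\<dots> \<longleftrightarrow> rk ?M2 (I \<union> Cc) = card I + rk ?M2 Cc" using I G by blast
    also have "\<dots> \<longleftrightarrow> r (I \<union> Cc \<union> L) - 2 = card I + (r (Cc \<union> L) - 2)"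
    proof -
      have "I \<union> Cc \<subseteq> gr ?M2" using I G CD by auto
      then show ?thesis using rkM2[of "I \<union> Cc"] rkM2[OF CD(1)] by simp
    qed
    also have "\<dots> \<longleftrightarrow> r (I \<union> Cc \<union> L) = card I + r (Cc \<union> L)"
      using rkL2[of "I \<union> Cc"] rkL2[of Cc] by linarith
    finally show ?thesis .
  qed
  have yjE: "y j \<in> E" using yE j by simp
  have yiE: "y i \<in> E" using yE i by simp
  have yjx: "y j \<noteq> x i" using yjL xiL by auto
  have yix: "y i \<noteq> x i" using yiL xiL by auto
  have sEL: "?s z \<in> E \<and> ?s z \<noteq> x i" if z: "z \<in> E - L" for z
  proof -
    have "z \<noteq> y j" using z yjL by auto
    then show ?thesis using z yjE yjx unfolding swp_def by auto
  qed
  have sEL2: "?s z \<noteq> y i" if "z \<in> E - L" for z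
    using that xiL yiL yij unfolding swp_def by auto
  let ?K = "?s ` Cc \<union> {y i}"
  let ?G' = "?s ` ?G"
  let ?Me = "contract M {x i}"
  let ?D' = "(E - {x i} - ?K) - ?G'"
  let ?M' = "delete (contract ?Me ?K) ?D'"
  have CcEL: "Cc \<subseteq> E - L" and GEL: "?G \<subseteq> E - L" using CD WEL G by auto
  have KE: "?K \<subseteq> E - {x i}"
  proof
    fix w assume "w \<in> ?K"
    then consider (a) c where "c \<in> Cc" "w = ?s c" | (b) "w = y i" by blast
    then show "w \<in> E - {x i}"
    proof cases
      case a
      then have "c \<in> E - L" using CcEL by blast
      then have "?s c \<in> E \<and> ?s c \<noteq> x i" by (rule sEL)
      then show ?thesis using a by simp
    next
      case b then show ?thesis using yiE yix by simp
    qed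
  qed
  have GE': "?G' \<subseteq> E - {x i} - ?K"
  proof
    fix w assume "w \<in> ?G'"
    then obtain g where g: "g \<in> ?G" "w = ?s g" by (rule imageE)
    have "g \<notin> Cc" using g(1) unfolding G by simp
    have "w \<notin> ?s ` Cc"
    proof
      assume "w \<in> ?s ` Cc"
      then obtain c where c: "c \<in> Cc" "w = ?s c" by (rule imageE)
      then have "?s g = ?s c" using g by simp
      then have "g = c" by (metis swp_swp)
      then show False using c \<open>g \<notin> Cc\<close> by simp
    qed
    moreover have gEL: "g \<in> E - L" using subsetD[OF GEL g(1)] .
    moreover have "w \<noteq> y i" using sEL2[OF gEL] g by simp
    moreover have "w \<in> E - {x i}"
    proof -
      have "?s g \<in> E \<and> ?s g \<noteq> x i" using sEL[OF gEL] .
      then show ?thesis using g by simp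
    qed
    ultimately show "w \<in> E - {x i} - ?K" by blast
  qed
  have m1: "?K \<subseteq> gr ?Me" using KE by simp
  have m2: "?D' \<subseteq> gr ?Me" unfolding gr_contract by blast
  have m3: "?K \<inter> ?D' = {}" by blast
  have "?K \<subseteq> gr ?Me \<and> ?D' \<subseteq> gr ?Me \<and> ?K \<inter> ?D' = {} \<and> ?M' = delete (contract ?Me ?K) ?D'"
    using m1 m2 m3 by simp
  then have minor: "is_minor ?M' ?Me" unfolding is_minor_def by (rule exI[of _ ?K, OF exI[of _ ?D']])
  have grM': "gr ?M' = ?G'"
  proof -
    have "gr ?M' = (E - {x i} - ?K) - ?D'" by simp
    also have "\<dots> = ?G'" using GE' by blast
    finally show ?thesis .
  qed
  have indM': "ind ?M' (?s ` I) \<longleftrightarrow> ind N0 I" if I: "I \<subseteq> ?G" for I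
  proof -
    let ?J = "?s ` I"
    have JG: "?J \<subseteq> ?G'" using I by (rule image_mono)
    have j1: "?J \<subseteq> E - {x i} - ?K" using JG GE' by (rule subset_trans)
    have j2: "?J \<inter> ?D' = {}" using JG by blast
    have "ind ?M' ?J \<longleftrightarrow> (?J \<subseteq> E - {x i} - ?K \<and> rk ?Me (?J \<union> ?K) = card ?J + rk ?Me ?K) \<and> ?J \<inter> ?D' = {}"
      by (simp add: ind_delete ind_contract)
    also have "\<dots> \<longleftrightarrow> rk ?Me (?J \<union> ?K) = card ?J + rk ?Me ?K" using j1 j2 by simp
    also have "\<dots> \<longleftrightarrow> r (?J \<union> ?K \<union> {x i}) - 1 = card ?J + (r (?K \<union> {x i}) - 1)"
    proof -
      have "?J \<subseteq> E - {x i}" using j1 by blast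
      then have "?J \<union> ?K \<subseteq> E - {x i}" using KE by (rule Un_least)
      then show ?thesis using rk_c[OF i, of "?J \<union> ?K"] rk_c[OF i KE] by simp
    qed
    also have "\<dots> \<longleftrightarrow> r (?J \<union> ?K \<union> {x i}) = card ?J + r (?K \<union> {x i})"
    proof -
      have "1 \<le> r (?K \<union> {x i})" "1 \<le> r (?J \<union> ?K \<union> {x i})"
        using rk1[OF xiE] rk_mono[of "{x i}" "?K \<union> {x i}"] rk_mono[of "{x i}" "?J \<union> ?K \<union> {x i}"] by auto
      then show ?thesis by linarith
    qed
    also have "\<dots> \<longleftrightarrow> r (I \<union> Cc \<union> L) = card I + r (Cc \<union> L)"
    proof -
      have e1: "?J \<union> ?K \<union> {x i} = ?s ` (I \<union> Cc) \<union> {y i, x i}" by blast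
      have e2: "?K \<union> {x i} = ?s ` Cc \<union> {y i, x i}" by blast
      have r1: "r (?J \<union> ?K \<union> {x i}) = r (I \<union> Cc \<union> L)"
      proof -
        have "I \<subseteq> E - L" using I GEL by (rule subset_trans)
        then have "I \<union> Cc \<subseteq> E - L" using CcEL by (rule Un_least)
        then show ?thesis unfolding e1 using KL[OF i j] by simp
      qed
      have r2: "r (?K \<union> {x i}) = r (Cc \<union> L)"
        unfolding e2 using KL[OF i j CcEL] .
      have c: "card ?J = card I" using card_image[OF inj_on_subset[OF swp_inj subset_UNIV]] .
      show ?thesis using r1 r2 c by simp
    qed
    also have "\<dots> \<longleftrightarrow> ind N0 I" using indN0[OF I] by simp
    finally show ?thesis .
  qed
  have bs: "bij_betw ?s ?G' ?G"
    unfolding bij_betw_def using inj_on_subset[OF swp_inj] by auto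
  have iso: "iso ?M' N" unfolding iso_def
  proof (intro exI[of _ "f0 \<circ> ?s"] conjI allI impI)
    show "bij_betw (f0 \<circ> ?s) (gr ?M') (gr N)" unfolding grM' using bij_betw_trans[OF bs f0] .
    fix J assume J: "J \<subseteq> gr ?M'"
    let ?I = "?s ` J"
    have IG: "?I \<subseteq> ?G" using J grM' by auto
    have "ind ?M' J \<longleftrightarrow> ind ?M' (?s ` ?I)" by simp
    also have "\<dots> \<longleftrightarrow> ind N0 ?I" using indM'[OF IG] .
    also have "\<dots> \<longleftrightarrow> ind N (f0 ` ?I)" using f0i[OF IG] .
    also have "\<dots> \<longleftrightarrow> ind N ((f0 \<circ> ?s) ` J)" by (simp add: image_comp)
    finally show "ind ?M' J \<longleftrightarrow> ind N ((f0 \<circ> ?s) ` J)" .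
  qed
  show ?thesis unfolding has_minor_def using minor iso by blast
qed

end

theorem proposition4p6:
  fixes M :: "'a matroid" and N :: "'b matroid"
  assumes "is_matroid M" and "n_connected M 3" and "simple M"
    and "is_matroid N" and "n_connected N 3" and "simple N" and "has_minor M N"
    and "rk M (gr M) \<ge> 4"
    and "carambole M N n x y"
  shows "ind M (hull n x) \<and> (\<forall>e\<in>hull n x. N_contractible M N e)"
proof -
  have car: "n \<ge> 3" "\<forall>i<n. x i \<in> gr M \<and> y i \<in> gr M" "inj_on y {..<n}"
    "rk M (y ` {..<n}) = 2" "vert_N_contractible M N (y ` {..<n})"
    "\<forall>i<n. cocircuit M ((y ` {..<n} - {y i}) \<union> {x i})"
    using assms(9) unfolding carambole_def by auto
  interpret c: carctx M n x y
    by (unfold_locales) (use assms car in auto)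
  have ind: "ind M (hull n x)" unfolding hull_def by (rule c.indX)
  obtain S where S: "has_minor (restrict (contract M (y ` {..<n})) S) N"
    using car(5) unfolding vert_N_contractible_def by blast
  have "N_contractible M N e" if e: "e \<in> hull n x" for e
  proof -
    obtain i where i: "i < n" "e = x i" using e unfolding hull_def by blast
    define j where "j = (if i = 0 then 1 else (0::nat))"
    have j: "j < n" "j \<noteq> i" unfolding j_def using car(1) by auto
    show ?thesis unfolding N_contractible_def
      using i car(2) c.conn_contract[OF i(1)] c.minor_transfer[OF i(1) j S] by auto
  qed
  then show ?thesis using ind by blast
qed

end
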